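(* Let $M,N,K$ be positive integers, let $s,r$ be integers with $1\le r\le \min\{s,K\}$ and $s\le N$, and let $A\in\mathbb{R}^{M\times N}$. Suppose the map $Z\mapsto AZ$ is injective on $\Sigma_{s,r}$. Then for every $X\in\Sigma_s$ we have $\operatorname{rank}(X)=\operatorname{rank}(AX)$.
   Context: A matrix $X\in\mathbb{R}^{N\times K}$ is called $s$-row sparse if at most $s$ of its rows are non-zero. $\Sigma_s$ denotes the set of all $s$-row sparse matrices in $\mathbb{R}^{N\times K}$, and $\Sigma_{s,r}$ denotes the set of all $s$-row sparse matrices in $\mathbb{R}^{N\times K}$ of rank at least $r$. *)

theory Defs
  imports "HOL-Analysis.Analysis"
begin

text \<open>Matrices in R^(N x K) are represented as real^'k^'n (rows indexed by 'n, N = CARD('n),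
  K = CARD('k)). Row i of X is X $ i.\<close>

definition Sigma_s :: "nat \<Rightarrow> (real^'k^'n) set" where
  "Sigma_s s = {X. card {i. X $ i \<noteq> 0} \<le> s}"

definition Sigma_sr :: "nat \<Rightarrow> nat \<Rightarrow> (real^'k^'n) set" where
  "Sigma_sr s r = {X. X \<in> Sigma_s s \<and> rank X \<ge> r}"

end

theory Submission imports Defs begin

lemma axis_indep: "independent ((\<lambda>t. axis t (1::real)) ` (U::'n::finite set))"
proof -
  have "(\<lambda>t. axis t (1::real)) ` U \<subseteq> (Basis :: (real^'n) set)"
    by (auto simp: Basis_vec_def cart_basis_def)
  then show ?thesis by (meson independent_Basis independent_mono)
qed

lemma key_rank:
  fixes A :: "real^'n^'m" and X :: "real^'k^'n"
  assumes "rank (A ** X) \<noteq> rank X"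
  shows "\<exists>y. X *v y \<noteq> 0 \<and> A *v (X *v y) = 0"
proof (rule ccontr)
  assume H: "\<not> ?thesis"
  let ?R = "range (\<lambda>x. X *v x)"
  have sub: "subspace ?R"
    by (metis linear_subspace_image matrix_vector_mul_linear subspace_UNIV)
  have "inj_on ((*v) A) (span ?R)"
  proof (rule inj_onI)
    fix x y assume "x \<in> span ?R" "y \<in> span ?R" "A *v x = A *v y"
    then obtain a b where "x = X *v a" "y = X *v b" using sub by (metis (no_types, lifting) imageE span_eq_iff)
    then have "A *v (X *v (a - b)) = 0" using \<open>A *v x = A *v y\<close>
      by (simp add: matrix_vector_mult_diff_distrib)
    then have "X *v (a - b) = 0" using H by blast
    then show "x = y" using \<open>x = X *v a\<close> \<open>y = X *v b\<close>
      by (simp add: matrix_vector_mult_diff_distrib)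
  qed
  then have "dim ((*v) A ` ?R) = dim ?R"
    by (simp add: dim_image_eq)
  moreover have "rank (A ** X) = dim ((*v) A ` ?R)"
    by (auto simp: rank_dim_range image_comp o_def matrix_vector_mul_assoc)
  ultimately show False using assms by (simp add: rank_dim_range)
qed

lemma supp_mv:
  fixes X :: "real^'k^'n"
  shows "{i. (X *v y) $ i \<noteq> 0} \<subseteq> {i. X $ i \<noteq> 0}"
  by (auto simp: matrix_vector_mult_def)

lemma construct:
  fixes A :: "real^'n^'m" and v :: "real^'n"
  assumes v0: "v \<noteq> 0" and Av: "A *v v = 0" and sv: "card {i. v$i \<noteq> 0} \<le> s"
    and sN: "s \<le> CARD('n)" and r1: "1 \<le> r" and rs: "r \<le> s" and rK: "r \<le> CARD('k)"
  shows "\<exists>Z1 \<in> Sigma_sr s r. \<exists>Z2 \<in> Sigma_sr s r. Z1 \<noteq> Z2 \<and> A ** Z1 = A ** (Z2::real^'k^'n)"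
proof -
  let ?S = "{i. v$i \<noteq> 0}"
  obtain j where j: "v$j \<noteq> 0" using v0 by (metis vec_eq_iff zero_index)
  have "card (UNIV - ?S) = CARD('n) - card ?S"
    by (simp add: card_Diff_subset)
  then have "s - card ?S \<le> card (UNIV - ?S)" using sN by linarith
  then obtain S' where S': "S' \<subseteq> UNIV - ?S" "card S' = s - card ?S"
    using obtain_subset_with_card_n by metis
  define T where "T = ?S \<union> S'"
  have cardT: "card T = s" unfolding T_def
    using S' sv by (subst card_Un_disjoint) auto
  have jT: "j \<in> T" using j T_def by auto
  have "card (T - {j}) = s - 1" using cardT jT by simp
  then have "r - 1 \<le> card (T - {j})" using rs by linarith
  then obtain U where U: "U \<subseteq> T - {j}" "card U = r - 1"
    using obtain_subset_with_card_n by metis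
  obtain c0 :: 'k where True by blast
  have "card (UNIV - {c0}) = CARD('k) - 1" by (simp add: card_Diff_subset)
  then have "card U \<le> card (UNIV - {c0})" using U rK by linarith
  then obtain h where h: "h ` U \<subseteq> UNIV - {c0}" "inj_on h U"
    using card_le_inj[of U "UNIV - {c0}"] by auto
  define mk where "mk w = (\<chi> i. \<chi> c. if c = c0 then w$i else if c \<in> h ` U \<and> i = inv_into U h c then 1 else 0 :: real^'k^'n)" for w :: "real^'n"
  have col0: "column c0 (mk w) = w" for w by (simp add: mk_def column_def vec_eq_iff)
  have colh: "column (h t) (mk w) = axis t 1" if t: "t \<in> U" for t w
  proof -
    have "h t \<noteq> c0" using h t by auto
    moreover have "inv_into U h (h t) = t" using h t by (simp add: inv_into_f_f)
    ultimately show ?thesis using t by (auto simp: mk_def column_def vec_eq_iff axis_def)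
  qed
  have good: "mk w \<in> Sigma_sr s r" if w1: "w$j \<noteq> 0" and w2: "{i. w$i \<noteq> 0} \<subseteq> T" for w
  proof -
    have rows: "{i. mk w $ i \<noteq> 0} \<subseteq> T"
    proof
      fix i assume "i \<in> {i. mk w $ i \<noteq> 0}"
      then have "\<exists>c. mk w $ i $ c \<noteq> 0" by (simp add: vec_eq_iff)
      then obtain c where c: "mk w $ i $ c \<noteq> 0" by blast
      have "w $ i \<noteq> 0 \<or> (c \<in> h ` U \<and> i = inv_into U h c)"
      proof (rule ccontr)
        assume "\<not> ?thesis"
        then have "mk w $ i $ c = 0" unfolding mk_def by auto
        then show False using c by simp
      qed
      then show "i \<in> T" using w2 U h(2) by (auto simp: inv_into_f_f)
    qed
    then have "card {i. mk w $ i \<noteq> 0} \<le> card T" by (intro card_mono) simp_all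
    then have c1: "card {i. mk w $ i \<noteq> 0} \<le> s" using cardT by simp
    let ?B = "(\<lambda>t. axis t (1::real)) ` U"
    have indB: "independent ?B" by (rule axis_indep)
    have sub: "subspace {x::real^'n. x$j = 0}" by (simp add: subspace_def)
    have "?B \<subseteq> {x. x$j = 0}" using U by (auto simp: axis_def)
    then have "span ?B \<subseteq> {x. x$j = 0}" using sub by (rule span_minimal)
    then have wB: "w \<notin> span ?B" using w1 by auto
    have ind: "independent (insert w ?B)" using wB indB by (rule independent_insertI)
    have "card ?B = r - 1" using U by (subst card_image) (auto simp: inj_on_def axis_eq_axis)
    moreover have "w \<notin> ?B"
    proof
      assume "w \<in> ?B"
      then have "w \<in> span ?B" by (rule span_base)
      then show False using wB by contradiction
    qed
    moreover have "finite ?B" by simp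
    ultimately have "card (insert w ?B) = Suc (r - 1)" by (metis card_insert_disjoint)
    then have cardI: "card (insert w ?B) = r" using r1 by linarith
    have "insert w ?B \<subseteq> columns (mk w)"
    proof
      fix x assume "x \<in> insert w ?B"
      then have "x = column c0 (mk w) \<or> (\<exists>t\<in>U. x = column (h t) (mk w))"
        using col0 colh by auto
      then show "x \<in> columns (mk w)" unfolding columns_def by blast
    qed
    then have "r \<le> dim (columns (mk w))" using independent_card_le_dim[OF _ ind] cardI by simp
    then have "r \<le> rank (mk w)" by (simp add: column_rank_def)
    then show ?thesis using c1 by (simp add: Sigma_sr_def Sigma_s_def)
  qed
  have Z1: "mk v \<in> Sigma_sr s r" by (rule good) (auto simp: T_def j)
  have Z2: "mk ((2::real) *s v) \<in> Sigma_sr s r" by (rule good) (auto simp: T_def j)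
  have ne: "mk v \<noteq> mk ((2::real) *s v)"
  proof
    assume "mk v = mk ((2::real) *s v)"
    then have "column c0 (mk v) = column c0 (mk ((2::real) *s v))" by simp
    then have "v = (2::real) *s v" by (simp add: col0)
    then have "v $ j = 2 * v $ j" by (metis vector_smult_component)
    then show False using j by simp
  qed
  have sum0: "(\<Sum>l\<in>UNIV. A$i$l * v$l) = 0" for i
  proof -
    have "(A *v v) $ i = 0" using Av by simp
    then show ?thesis by (simp add: matrix_vector_mult_def)
  qed
  have eq: "A ** mk v = A ** mk ((2::real) *s v)"
  proof -
    have "(\<Sum>l\<in>UNIV. A$i$l * v$l) = (\<Sum>l\<in>UNIV. A$i$l * (2 * v$l))" for i
    proof -
      have "(\<Sum>l\<in>UNIV. A$i$l * (2 * v$l)) = 2 * (\<Sum>l\<in>UNIV. A$i$l * v$l)"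
        by (simp add: sum_distrib_left algebra_simps)
      then show ?thesis using sum0[of i] by simp
    qed
    note E = this
    show ?thesis unfolding matrix_matrix_mult_def mk_def vec_eq_iff
    proof (intro allI)
      fix i c
      show "(\<chi> i j. \<Sum>k\<in>UNIV. A $ i $ k * (\<chi> i c. if c = c0 then v $ i else if c \<in> h ` U \<and> i = inv_into U h c then 1 else 0) $ k $ j) $ i $ c =
            (\<chi> i j. \<Sum>k\<in>UNIV. A $ i $ k * (\<chi> i c. if c = c0 then ((2::real) *s v) $ i else if c \<in> h ` U \<and> i = inv_into U h c then 1 else 0) $ k $ j) $ i $ c"
        using E[of i] by (cases "c = c0") simp_all
    qed
  qed
  show ?thesis using Z1 Z2 ne eq by blast
qed

theorem proposition1:
  fixes A :: "real^'n^'m" and s r :: nat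
  assumes "1 \<le> r" and "r \<le> min s CARD('k)" and "s \<le> CARD('n)"
    and "inj_on (\<lambda>Z::real^'k^'n. A ** Z) (Sigma_sr s r)"
  shows "\<forall>X::real^'k^'n. X \<in> Sigma_s s \<longrightarrow> rank X = rank (A ** X)"
proof (intro allI impI)
  fix X :: "real^'k^'n"
  assume X: "X \<in> Sigma_s s"
  show "rank X = rank (A ** X)"
  proof (rule ccontr)
    assume "rank X \<noteq> rank (A ** X)"
    then obtain y where y: "X *v y \<noteq> 0" "A *v (X *v y) = 0"
      using key_rank[of A X] by metis
    have "card {i. (X *v y) $ i \<noteq> 0} \<le> card {i. X $ i \<noteq> 0}"
      by (intro card_mono) (simp_all add: supp_mv)
    also have "\<dots> \<le> s" using X by (simp add: Sigma_s_def)
    finally have sv: "card {i. (X *v y) $ i \<noteq> 0} \<le> s" .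
    have "r \<le> s" "r \<le> CARD('k)" using assms(2) by auto
    then obtain Z1 Z2 :: "real^'k^'n" where "Z1 \<in> Sigma_sr s r" "Z2 \<in> Sigma_sr s r"
      "Z1 \<noteq> Z2" "A ** Z1 = A ** Z2"
      using construct[OF y sv assms(3) assms(1)] by blast
    then show False using assms(4) by (meson inj_onD)
  qed
qed

end
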